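(* For all integers $d\ge 4$ and $\ell\ge 4$, the diameter of $CK(d,\ell)$ is at most $2\ell-2$.
   Context: Let $\Sigma=\{0,1,\dots,d\}$. The cyclic Kautz digraph $CK(d,\ell)$ has as vertices all sequences $a_1\ldots a_\ell\in\Sigma^\ell$ with $a_i\neq a_{i+1}$ for $1\le i\le \ell-1$ and $a_1\neq a_\ell$, with an arc from $a_1\ldots a_\ell$ to $b_1\ldots b_\ell$ iff both are vertices and $b_i=a_{i+1}$ for $1\le i\le\ell-1$. The diameter is the maximum over ordered pairs of vertices of the directed distance. *)

theory Defs
  imports Main "HOL-Library.Extended_Nat"
begin

text \<open>Vertices are sequences a_1 ... a_l (as lists of
  length l, indexed from 0) over the alphabet {0,...,d}, with consecutive entries
  distinct and first entry distinct from the last.\<close>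

definition ck_vertex :: "nat \<Rightarrow> nat \<Rightarrow> nat list \<Rightarrow> bool" where
  "ck_vertex d l xs \<longleftrightarrow>
     length xs = l \<and> (\<forall>i<l. xs ! i \<le> d) \<and>
     (\<forall>i. i + 1 < l \<longrightarrow> xs ! i \<noteq> xs ! (i + 1)) \<and>
     xs ! 0 \<noteq> xs ! (l - 1)"

definition ck_arcs :: "nat \<Rightarrow> nat \<Rightarrow> (nat list \<times> nat list) set" where
  "ck_arcs d l = {(xs, ys). ck_vertex d l xs \<and> ck_vertex d l ys \<and>
                    (\<forall>i. i + 1 < l \<longrightarrow> ys ! i = xs ! (i + 1))}"

definition ck_dist :: "nat \<Rightarrow> nat \<Rightarrow> nat list \<Rightarrow> nat list \<Rightarrow> enat" where
  "ck_dist d l u v =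
     (if \<exists>k. (u, v) \<in> ck_arcs d l ^^ k
      then enat (LEAST k. (u, v) \<in> ck_arcs d l ^^ k) else \<infinity>)"

definition ck_diameter :: "nat \<Rightarrow> nat \<Rightarrow> enat" where
  "ck_diameter d l = Sup {ck_dist d l u v | u v. ck_vertex d l u \<and> ck_vertex d l v}"

end

theory Submission
  imports Defs
begin

definition pick :: "nat set \<Rightarrow> nat" where "pick S = (LEAST n. n \<notin> S)"

lemma pick: assumes "finite S" "card S \<le> 4" shows "pick S \<notin> S \<and> pick S \<le> 4"
proof -
  have "\<not> {0..4::nat} \<subseteq> S"
  proof
    assume "{0..4::nat} \<subseteq> S"
    then have "card {0..4::nat} \<le> card S" using assms(1) by (rule card_mono[rotated])
    then show False using assms(2) by simp
  qed
  then obtain n where n: "n \<le> 4" "n \<notin> S" by (meson atLeastAtMost_iff subsetI)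
  then show ?thesis unfolding pick_def
    by (metis (mono_tags, lifting) LeastI Least_le le_trans)
qed

lemma pick4: "pick {a,b,c,e} \<notin> {a,b,c,e} \<and> pick {a,b,c,e} \<le> 4"
proof (rule pick)
  show "card {a,b,c,e} \<le> 4"
    by (simp add: card_insert_if)
qed simp

primrec ckp :: "nat list \<Rightarrow> nat list \<Rightarrow> nat \<Rightarrow> nat \<Rightarrow> nat \<Rightarrow> nat" where
"ckp u v l m 0 = u!(l-1)" |
"ckp u v l m (Suc i) = pick {ckp u v l m i, u!(i+1), v!(l+i-1-m), (if Suc i = m then v!0 else u!(i+1))}"


lemma win_nth: "i < l \<Longrightarrow> map W [n..<n+l] ! i = W (n+i)"
  by simp

lemma win_vertex:
  assumes A: "\<forall>j<N. W j \<le> d" and B: "\<forall>j. j+1 < N \<longrightarrow> W j \<noteq> W (j+1)"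
    and C: "\<forall>j. j+l-1 < N \<longrightarrow> W j \<noteq> W (j+l-1)" and l: "l \<ge> 1" and n: "n + l \<le> N"
  shows "ck_vertex d l (map W [n..<n+l])"
  unfolding ck_vertex_def
proof (intro conjI allI impI)
  show "length (map W [n..<n + l]) = l" by simp
  fix i assume "i < l" then show "map W [n..<n + l] ! i \<le> d" using A n by simp
next
  fix i assume "i + 1 < l" then show "map W [n..<n + l] ! i \<noteq> map W [n..<n + l] ! (i + 1)"
    using B[rule_format, of "n+i"] n by simp
next
  show "map W [n..<n + l] ! 0 \<noteq> map W [n..<n + l] ! (l - 1)"
    using C[rule_format, of n] n l by simp
qed

lemma win_walk:
  assumes A: "\<forall>j<N. W j \<le> d" and B: "\<forall>j. j+1 < N \<longrightarrow> W j \<noteq> W (j+1)"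
    and C: "\<forall>j. j+l-1 < N \<longrightarrow> W j \<noteq> W (j+l-1)" and l: "l \<ge> 1"
  shows "n + l \<le> N \<Longrightarrow> (map W [0..<l], map W [n..<n+l]) \<in> ck_arcs d l ^^ n"
proof (induction n)
  case 0
  then show ?case by simp
next
  case (Suc n)
  then have "(map W [0..<l], map W [n..<n+l]) \<in> ck_arcs d l ^^ n" by simp
  moreover have "(map W [n..<n+l], map W [Suc n..<Suc n+l]) \<in> ck_arcs d l"
  proof -
    have "\<forall>i. i + 1 < l \<longrightarrow> map W [Suc n..<Suc n+l] ! i = map W [n..<n+l] ! (i + 1)"
      by (simp del: upt_Suc)
    then show ?thesis
      unfolding ck_arcs_def using win_vertex[OF A B C l, of n] win_vertex[OF A B C l, of "Suc n"] Suc.prems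
      by simp
  qed
  ultimately show ?case by auto
qed

lemma main:
  fixes d l m :: nat and u v :: "nat list"
  assumes d: "d \<ge> 4" and l: "l \<ge> 4" and u: "ck_vertex d l u" and v: "ck_vertex d l v"
    and m1: "m \<ge> 1" and m2: "m + 2 \<le> l"
    and H: "\<forall>j. m+1 \<le> j \<longrightarrow> j \<le> l-1 \<longrightarrow> u!j \<noteq> v!(j-1-m)"
  shows "(u, v) \<in> ck_arcs d l ^^ (l+m)"
proof -
  define p where "p = ckp u v l m"
  have p0: "p 0 = u!(l-1)" unfolding p_def by simp
  have pS: "p (Suc i) = pick {p i, u!(i+1), v!(l+i-1-m), (if Suc i = m then v!0 else u!(i+1))}" for i
    unfolding p_def by simp
  have P: "p (Suc i) \<noteq> p i \<and> p (Suc i) \<noteq> u!(i+1) \<and> p (Suc i) \<noteq> v!(l+i-1-m) \<and>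
     (Suc i = m \<longrightarrow> p (Suc i) \<noteq> v!0) \<and> p (Suc i) \<le> 4" for i
  proof -
    have "pick {p i, u!(i+1), v!(l+i-1-m), (if Suc i = m then v!0 else u!(i+1))} \<notin> {p i, u!(i+1), v!(l+i-1-m), (if Suc i = m then v!0 else u!(i+1))} \<and>
      pick {p i, u!(i+1), v!(l+i-1-m), (if Suc i = m then v!0 else u!(i+1))} \<le> 4"
      by (rule pick4)
    then show ?thesis unfolding pS[symmetric] by (cases "Suc i = m") simp_all
  qed
  have P1: "p (Suc i) \<noteq> p i" and P2: "p (Suc i) \<noteq> u!(i+1)" and P3: "p (Suc i) \<noteq> v!(l+i-1-m)"
    and P5: "p (Suc i) \<le> 4" for i using P[of i] by simp_all
  have P4: "p m \<noteq> v!0" using P[of "m-1"] m1 by simp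
  define W where "W j = (if j < l then u!j else if j < l+m then p (j-l+1) else v!(j-l-m))" for j
  have Wu: "j < l \<Longrightarrow> W j = u!j" for j unfolding W_def by simp
  have Wp: "l \<le> j \<Longrightarrow> j < l+m \<Longrightarrow> W j = p (Suc (j-l))" for j unfolding W_def by simp
  have Wv: "l+m \<le> j \<Longrightarrow> W j = v!(j-l-m)" for j unfolding W_def by simp
  define N where "N = l + m + l"
  have ul: "length u = l" and vl: "length v = l" using u v by (auto simp: ck_vertex_def)
  have ud: "\<And>i. i<l \<Longrightarrow> u!i \<le> d" and vd: "\<And>i. i<l \<Longrightarrow> v!i \<le> d" using u v by (auto simp: ck_vertex_def)
  have uc: "\<And>i. i+1 < l \<Longrightarrow> u!i \<noteq> u!(i+1)" and vc: "\<And>i. i+1 < l \<Longrightarrow> v!i \<noteq> v!(i+1)"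
    using u v by (auto simp: ck_vertex_def)
  have ue: "u!0 \<noteq> u!(l-1)" and ve: "v!0 \<noteq> v!(l-1)" using u v by (auto simp: ck_vertex_def)
  have A: "\<forall>j<N. W j \<le> d"
  proof (intro allI impI)
    fix j assume j: "j < N"
    consider "j < l" | "l \<le> j" "j < l+m" | "l+m \<le> j" by linarith
    then show "W j \<le> d"
    proof cases
      case 1 then show ?thesis using Wu ud by simp
    next
      case 2 then show ?thesis using Wp[OF 2] P5[of "j-l"] d by simp
    next
      case 3 then show ?thesis using Wv[OF 3] vd[of "j-l-m"] j unfolding N_def by simp
    qed
  qed
  have B: "\<forall>j. j+1 < N \<longrightarrow> W j \<noteq> W (j+1)"
  proof (intro allI impI)
    fix j assume j: "j+1 < N"
    consider "j+1 < l" | "j+1 = l" | "l \<le> j" "j+1 < l+m" | "j + 1 = l+m" | "l+m \<le> j"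
      using m1 by linarith
    then show "W j \<noteq> W (j+1)"
    proof cases
      case 1 then show ?thesis using uc[OF 1] Wu[of j] Wu[of "j+1"] by simp
    next
      case 2
      then have "j = l - 1" "j < l" by simp_all
      then have "W j = p 0" using Wu[of j] p0 by simp
      moreover have "W (j+1) = p (Suc 0)" using Wp[of "j+1"] 2 m1 by simp
      ultimately show ?thesis using P1[of 0] by simp
    next
      case 3
      then have "W j = p (Suc (j-l))" "W (j+1) = p (Suc (Suc (j-l)))" using Wp[of j] Wp[of "j+1"]
        by (simp_all add: Suc_diff_le)
      then show ?thesis using P1[of "Suc (j-l)"] by simp
    next
      case 4
      then have "Suc (j-l) = m" "l \<le> j" using m1 by simp_all
      then have "W j = p m" using Wp[of j] 4 by simp
      moreover have "W (j+1) = v!0" using Wv[of "j+1"] 4 by simp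
      ultimately show ?thesis using P4 by simp
    next
      case 5
      then have "W j = v!(j-l-m)" "W (j+1) = v!(j-l-m+1)" using Wv[of j] Wv[of "j+1"] by (simp_all add: Suc_diff_le)
      moreover have "j-l-m+1 < l" using j 5 unfolding N_def by simp
      ultimately show ?thesis using vc[of "j-l-m"] by simp
    qed
  qed
  have C: "\<forall>j. j+l-1 < N \<longrightarrow> W j \<noteq> W (j+l-1)"
  proof (intro allI impI)
    fix j assume j: "j+l-1 < N"
    consider "j = 0" | "1 \<le> j" "j \<le> m" | "m+1 \<le> j" "j \<le> l-1" | "l \<le> j" "j < l+m" | "j = l+m"
      using j l unfolding N_def by linarith
    then show "W j \<noteq> W (j+l-1)"
    proof cases
      case 1 then show ?thesis using ue l Wu[of 0] Wu[of "l-1"] by simp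
    next
      case 2
      then have "W j = u!(Suc (j-1))" using Wu[of j] m2 by simp
      moreover have "W (j+l-1) = p (Suc (j-1))" using Wp[of "j+l-1"] 2 l by simp
      ultimately show ?thesis using P2[of "j-1"] by simp
    next
      case 3
      then have "W j = u!j" using Wu[of j] l by simp
      moreover have "W (j+l-1) = v!(j-1-m)" using Wv[of "j+l-1"] 3 l by simp
      ultimately show ?thesis using H 3 by simp
    next
      case 4
      then have "W j = p (Suc (j-l))" using Wp[of j] by simp
      moreover have "W (j+l-1) = v!(l+(j-l)-1-m)" using Wv[of "j+l-1"] 4 l m2 by simp
      ultimately show ?thesis using P3[of "j-l"] by simp
    next
      case 5
      then have "W j = v!0" "W (j+l-1) = v!(l-1)" using Wv[of j] Wv[of "j+l-1"] l by simp_all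
      then show ?thesis using ve by simp
    qed
  qed
  have l1: "l \<ge> 1" using l by simp
  have "(map W [0..<l], map W [l+m..<l+m+l]) \<in> ck_arcs d l ^^ (l+m)"
    using win_walk[OF A B C l1, of "l+m"] unfolding N_def by simp
  moreover have "map W [0..<l] = u" using ul by (intro nth_equalityI) (simp_all add: Wu)
  moreover have "map W [l+m..<l+m+l] = v" using vl by (intro nth_equalityI) (simp_all add: Wv)
  ultimately show ?thesis by simp
qed

lemma walk_exists:
  fixes d l :: nat
  assumes d: "d \<ge> 4" and l: "l \<ge> 4" and u: "ck_vertex d l u" and v: "ck_vertex d l v"
  shows "\<exists>k \<le> 2*l-2. (u, v) \<in> ck_arcs d l ^^ k"
proof (cases "u!(l-1) = v!0")
  case False
  have "(u, v) \<in> ck_arcs d l ^^ (l+(l-2))"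
  proof (rule main[OF d l u v])
    show "\<forall>j. l-2+1 \<le> j \<longrightarrow> j \<le> l-1 \<longrightarrow> u!j \<noteq> v!(j-1-(l-2))"
    proof (intro allI impI)
      fix j assume "l-2+1 \<le> j" "j \<le> l-1"
      then have "j = l-1" "j-1-(l-2) = 0" using l by simp_all
      then show "u!j \<noteq> v!(j-1-(l-2))" using False by simp
    qed
  qed (use l in simp_all)
  then show ?thesis using l by (intro exI[of _ "l+(l-2)"]) simp
next
  case True
  have uc0: "\<forall>i. i + 1 < l \<longrightarrow> u!i \<noteq> u!(i+1)" using u unfolding ck_vertex_def by blast
  have "l-2+1 < l" "l-2+1 = l-1" using l by simp_all
  then have uc: "u!(l-2) \<noteq> u!(l-1)" using uc0 by metis
  have vc: "v!0 \<noteq> v!1" using v l unfolding ck_vertex_def by auto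
  have "(u, v) \<in> ck_arcs d l ^^ (l+(l-3))"
  proof (rule main[OF d l u v])
    show "\<forall>j. l-3+1 \<le> j \<longrightarrow> j \<le> l-1 \<longrightarrow> u!j \<noteq> v!(j-1-(l-3))"
    proof (intro allI impI)
      fix j assume "l-3+1 \<le> j" "j \<le> l-1"
      then consider "j = l-2" "j-1-(l-3) = 0" | "j = l-1" "j-1-(l-3) = 1" using l by linarith
      then show "u!j \<noteq> v!(j-1-(l-3))" using True uc vc by cases simp_all
    qed
  qed (use l in simp_all)
  then show ?thesis using l by (intro exI[of _ "l+(l-3)"]) simp
qed

theorem lemma8:
  fixes d l :: nat
  assumes "d \<ge> 4" and "l \<ge> 4"
  shows "ck_diameter d l \<le> enat (2 * l - 2)"
  unfolding ck_diameter_def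
proof (rule Sup_least)
  fix x assume "x \<in> {ck_dist d l u v | u v. ck_vertex d l u \<and> ck_vertex d l v}"
  then obtain u v where x: "x = ck_dist d l u v" and uv: "ck_vertex d l u" "ck_vertex d l v" by blast
  obtain k where k: "k \<le> 2*l-2" "(u, v) \<in> ck_arcs d l ^^ k"
    using walk_exists[OF assms uv] by blast
  have "(LEAST k. (u, v) \<in> ck_arcs d l ^^ k) \<le> k" using k(2) by (rule Least_le)
  then show "x \<le> enat (2 * l - 2)" unfolding x ck_dist_def using k by auto
qed

end
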